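(* Let $G$ be a pro-oligomorphic group and $U$ an open subgroup. Let $n(U)$ be the supremum of the set of $n\in\mathbf{N}$ for which there is a strict chain of subgroups $U=U_0\subsetneq U_1\subsetneq\cdots\subsetneq U_n\subset G$. Then $n(U)$ is finite; in fact $n(U)$ is at most the cardinality of the double coset space $U\backslash G/U$.
   Context: A pro-oligomorphic group is a topological group that is Hausdorff, non-archimedean (open subgroups form a neighborhood basis of the identity), and Roelcke pre-compact (for any open subgroups $U,V$, the double coset space $U\backslash G/V$ is finite). *)

theory Defs
  imports "HOL-Analysis.Analysis" "HOL-Algebra.Group" "HOL-Library.Extended_Nat"
begin

definition topological_group :: "('a, 'b) monoid_scheme \<Rightarrow> 'a topology \<Rightarrow> bool" where
  "topological_group G T \<longleftrightarrow> group G \<and> topspace T = carrier G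
     \<and> continuous_map (prod_topology T T) T (\<lambda>(x, y). x \<otimes>\<^bsub>G\<^esub> y)
     \<and> continuous_map T T (\<lambda>x. inv\<^bsub>G\<^esub> x)"

definition open_subgroup :: "('a, 'b) monoid_scheme \<Rightarrow> 'a topology \<Rightarrow> 'a set \<Rightarrow> bool" where
  "open_subgroup G T U \<longleftrightarrow> subgroup U G \<and> openin T U"

definition double_cosets :: "('a, 'b) monoid_scheme \<Rightarrow> 'a set \<Rightarrow> 'a set \<Rightarrow> 'a set set" where
  "double_cosets G U V =
     {{u \<otimes>\<^bsub>G\<^esub> g \<otimes>\<^bsub>G\<^esub> v | u v. u \<in> U \<and> v \<in> V} | g. g \<in> carrier G}"

definition pro_oligomorphic :: "('a, 'b) monoid_scheme \<Rightarrow> 'a topology \<Rightarrow> bool" where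
  "pro_oligomorphic G T \<longleftrightarrow>
     topological_group G T \<and> Hausdorff_space T
     \<and> (\<forall>W. openin T W \<and> \<one>\<^bsub>G\<^esub> \<in> W \<longrightarrow> (\<exists>V. open_subgroup G T V \<and> V \<subseteq> W))
     \<and> (\<forall>U V. open_subgroup G T U \<and> open_subgroup G T V \<longrightarrow> finite (double_cosets G U V))"

definition chain_lengths :: "('a, 'b) monoid_scheme \<Rightarrow> 'a set \<Rightarrow> nat set" where
  "chain_lengths G U = {n. \<exists>Us :: nat \<Rightarrow> 'a set. Us 0 = U
       \<and> (\<forall>i\<le>n. subgroup (Us i) G)
       \<and> (\<forall>i<n. Us i \<subset> Us (Suc i))}"

definition chain_sup :: "('a, 'b) monoid_scheme \<Rightarrow> 'a set \<Rightarrow> enat" where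
  "chain_sup G U = (SUP n \<in> chain_lengths G U. enat n)"

end

theory Submission
  imports Defs
begin

lemma chain_bound:
  assumes grp: "group G" and U: "subgroup U G" and fin: "finite (double_cosets G U U)"
    and n: "n \<in> chain_lengths G U"
  shows "n \<le> card (double_cosets G U U)"
proof -
  let ?DC = "double_cosets G U U"
  obtain Us where U0: "Us 0 = U" and sg: "\<forall>i\<le>n. subgroup (Us i) G"
    and ch: "\<forall>i<n. Us i \<subset> Us (Suc i)"
    using n unfolding chain_lengths_def by blast
  have sub: "i \<le> n \<Longrightarrow> U \<subseteq> Us i" for i
  proof (induction i)
    case 0 then show ?case using U0 by simp
  next
    case (Suc i) then show ?case using ch by (metis Suc_le_lessD less_imp_le_nat psubset_imp_subset subset_trans)
  qed
  define D where "D i = {d \<in> ?DC. d \<subseteq> Us i}" for i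
  have step: "card (D i) < card (D (Suc i))" if "i < n" for i
  proof -
    have s1: "subgroup (Us (Suc i)) G" using sg that by simp
    have US: "U \<subseteq> Us (Suc i)" using sub that by simp
    have "Us i \<subset> Us (Suc i)" using ch that by blast
    then obtain g where g: "g \<in> Us (Suc i)" "g \<notin> Us i" by blast
    have gc: "g \<in> carrier G" using g s1 subgroup.mem_carrier by metis
    define d where "d = {u \<otimes>\<^bsub>G\<^esub> g \<otimes>\<^bsub>G\<^esub> v | u v. u \<in> U \<and> v \<in> U}"
    have dDC: "d \<in> ?DC" unfolding d_def double_cosets_def using gc by blast
    have dsub: "d \<subseteq> Us (Suc i)"
    proof
      fix x assume "x \<in> d"
      then obtain u v where x: "x = u \<otimes>\<^bsub>G\<^esub> g \<otimes>\<^bsub>G\<^esub> v" "u \<in> U" "v \<in> U" unfolding d_def by blast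
      then show "x \<in> Us (Suc i)" using US g(1) s1 by (meson subgroup.m_closed subsetD)
    qed
    have gd: "g \<in> d"
    proof -
      have "\<one>\<^bsub>G\<^esub> \<in> U" using U subgroup.one_closed by blast
      moreover have "\<one>\<^bsub>G\<^esub> \<otimes>\<^bsub>G\<^esub> g \<otimes>\<^bsub>G\<^esub> \<one>\<^bsub>G\<^esub> = g" using gc grp by (simp add: group.is_monoid)
      ultimately show ?thesis unfolding d_def by force
    qed
    have "D i \<subseteq> D (Suc i)" unfolding D_def using ch that by blast
    moreover have "d \<in> D (Suc i)" "d \<notin> D i" unfolding D_def using dDC dsub gd g(2) by auto
    moreover have "finite (D (Suc i))" unfolding D_def using fin by simp
    ultimately have "D i \<subset> D (Suc i)" "finite (D (Suc i))" by blast+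
    then show ?thesis by (rule psubset_card_mono[rotated])
  qed
  have "i \<le> n \<Longrightarrow> i \<le> card (D i)" for i
  proof (induction i)
    case 0 then show ?case by simp
  next
    case (Suc i) then show ?case using step[of i] by simp
  qed
  then have "n \<le> card (D n)" by simp
  also have "card (D n) \<le> card ?DC" unfolding D_def using fin by (intro card_mono) auto
  finally show ?thesis .
qed

theorem proposition5p1:
  fixes G :: "('a, 'b) monoid_scheme" and T :: "'a topology" and U :: "'a set"
  assumes "pro_oligomorphic G T"
    and "open_subgroup G T U"
  shows "chain_sup G U \<noteq> \<infinity> \<and> finite (double_cosets G U U)
         \<and> chain_sup G U \<le> enat (card (double_cosets G U U))"
proof -
  have fin: "finite (double_cosets G U U)" using assms unfolding pro_oligomorphic_def by blast
  have grp: "group G" using assms unfolding pro_oligomorphic_def topological_group_def by blast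
  have U: "subgroup U G" using assms(2) unfolding open_subgroup_def by blast
  have le: "chain_sup G U \<le> enat (card (double_cosets G U U))"
    unfolding chain_sup_def
    by (rule SUP_least) (use chain_bound[OF grp U fin] in auto)
  then show ?thesis using fin by (cases "chain_sup G U") auto
qed

end
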